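(* Let $\beta$ be a nonstandard hypernatural number and $T$ a $\beta$-tree. Then for every $s\in T/st(T)$ there exists $X\in[\mathbb{N}]^\infty$ with $s\sqsubseteq X$ such that $[s,X]\subseteq[T]$.
   Context: Setting (Alpha-Theory of Benci–Di Nasso): ZFC together with a new symbol $\alpha$ satisfying: ($\alpha$1) every sequence $\varphi=\langle\varphi_i:i\in\mathbb{N}\rangle$ has a unique ideal value $\varphi[\alpha]$; ($\alpha$2) if $\varphi[\alpha]=\psi[\alpha]$ and $f\circ\varphi$, $f\circ\psi$ make sense then $(f\circ\varphi)[\alpha]=(f\circ\psi)[\alpha]$; ($\alpha$3) constant real sequences $r$ have ideal value $r$, and $\langle i\rangle$ has ideal value $\alpha\notin\mathbb{N}$; ($\alpha$4) if $\vartheta_i=\{\varphi_i,\psi_i\}$ then $\vartheta[\alpha]=\{\varphi[\alpha],\psi[\alpha]\}$; ($\alpha$5) the constant sequence $\emptyset$ has ideal value $\emptyset$, and for nonempty $\psi_i$, $\psi[\alpha]=\{\vartheta[\alpha]:\vartheta_i\in\psi_i\ \forall i\}$. ${}^*A$ is the ideal value of the constant sequence $A$; elements of ${}^*\mathbb{N}\setminus\mathbb{N}$ are nonstandard hypernatural numbers. For finite $s$ and $X\subseteq\mathbb{N}$, $s\sqsubseteq X$ means $s=\{j\in X:j\le i\}$ for some $i$; $[s,X]=\{Y\in[\mathbb{N}]^\infty:s\sqsubseteq Y\subseteq X\}$. A tree on $\mathbb{N}$ is a nonempty $T\subseteq[\mathbb{N}]^{<\infty}$ closed under $\sqsubseteq$-initial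 segments; $[T]=\{X\in[\mathbb{N}]^\infty:$ every finite $s\sqsubseteq X$ is in $T\}$; stem $st(T)$ = $\sqsubseteq$-maximal $s\in T$ comparable with all elements of $T$; $T/s=\{t\in T:s\sqsubseteq t\}$. A $\beta$-tree is a tree $T$ with a stem, $T/st(T)\neq\emptyset$, and $s\cup\{\beta\}\in{}^*T$ for all $s\in T/st(T)$. *)

theory Defs
  imports Main
begin

text \<open>Alpha-Theory is modelled by its ultrapower semantics: the ideal value of a
sequence is its class modulo the nonprincipal ultrafilter
U = {A. alpha in *A} on the naturals; membership of ideal values holds iff
it holds for U-almost all indices.\<close>

definition nonprincipal_ultrafilter :: "nat set set \<Rightarrow> bool" where
  "nonprincipal_ultrafilter U \<longleftrightarrow>
     UNIV \<in> U \<and> {} \<notin> U \<and>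
     (\<forall>A B. A \<in> U \<and> A \<subseteq> B \<longrightarrow> B \<in> U) \<and>
     (\<forall>A B. A \<in> U \<and> B \<in> U \<longrightarrow> A \<inter> B \<in> U) \<and>
     (\<forall>A. A \<in> U \<or> - A \<in> U) \<and>
     (\<forall>A. finite A \<longrightarrow> A \<notin> U)"

text \<open>A hypernatural beta = [f]_U is nonstandard iff it equals no standard n.\<close>
definition nonstandard_hypernat :: "nat set set \<Rightarrow> (nat \<Rightarrow> nat) \<Rightarrow> bool" where
  "nonstandard_hypernat U f \<longleftrightarrow> (\<forall>n::nat. {i. f i = n} \<notin> U)"

definition initseg :: "nat set \<Rightarrow> nat set \<Rightarrow> bool" where
  "initseg s X \<longleftrightarrow> (\<exists>i. s = {j \<in> X. j \<le> i})"

definition interval :: "nat set \<Rightarrow> nat set \<Rightarrow> nat set set" where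
  "interval s X = {Y. infinite Y \<and> initseg s Y \<and> Y \<subseteq> X}"

definition is_tree :: "nat set set \<Rightarrow> bool" where
  "is_tree T \<longleftrightarrow> T \<noteq> {} \<and> (\<forall>s\<in>T. finite s) \<and>
     (\<forall>t\<in>T. \<forall>s. initseg s t \<longrightarrow> s \<in> T)"

definition body :: "nat set set \<Rightarrow> nat set set" where
  "body T = {X. infinite X \<and> (\<forall>s. finite s \<and> initseg s X \<longrightarrow> s \<in> T)}"

definition comparable_all :: "nat set set \<Rightarrow> nat set \<Rightarrow> bool" where
  "comparable_all T s \<longleftrightarrow> (\<forall>t\<in>T. initseg s t \<or> initseg t s)"

definition is_stem :: "nat set set \<Rightarrow> nat set \<Rightarrow> bool" where
  "is_stem T s \<longleftrightarrow> s \<in> T \<and> comparable_all T s \<and>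
     (\<forall>u\<in>T. comparable_all T u \<and> initseg s u \<longrightarrow> u = s)"

definition stem :: "nat set set \<Rightarrow> nat set" where
  "stem T = (THE s. is_stem T s)"

definition tree_after :: "nat set set \<Rightarrow> nat set \<Rightarrow> nat set set" where
  "tree_after T s = {t \<in> T. initseg s t}"

text \<open>beta-tree, for beta = [f]_U: the condition  s \<union> {beta} \<in> *T  means
  {i. s \<union> {f i} \<in> T} \<in> U.\<close>
definition beta_tree :: "nat set set \<Rightarrow> (nat \<Rightarrow> nat) \<Rightarrow> nat set set \<Rightarrow> bool" where
  "beta_tree U f T \<longleftrightarrow> is_tree T \<and> (\<exists>s. is_stem T s) \<and>
     tree_after T (stem T) \<noteq> {} \<and>
     (\<forall>s\<in>tree_after T (stem T). {i. s \<union> {f i} \<in> T} \<in> U)"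

end

theory Submission
  imports Defs
begin

lemma uf_int: "nonprincipal_ultrafilter U \<Longrightarrow> A\<in>U \<Longrightarrow> B\<in>U \<Longrightarrow> A\<inter>B\<in>U"
  unfolding nonprincipal_ultrafilter_def by meson

lemma uf_compl: "nonprincipal_ultrafilter U \<Longrightarrow> A \<notin> U \<Longrightarrow> - A \<in> U"
  unfolding nonprincipal_ultrafilter_def by meson

lemma uf_empty: "nonprincipal_ultrafilter U \<Longrightarrow> {} \<notin> U"
  unfolding nonprincipal_ultrafilter_def by meson

lemma uf_univ: "nonprincipal_ultrafilter U \<Longrightarrow> UNIV \<in> U"
  unfolding nonprincipal_ultrafilter_def by meson

lemma uf_inter_finite:
  assumes U: "nonprincipal_ultrafilter U" and fin: "finite A" and sub: "A \<subseteq> U"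
  shows "\<Inter>A \<in> U"
  using fin sub
proof (induction A rule: finite_induct)
  case empty then show ?case using uf_univ[OF U] by simp
next
  case (insert a A)
  then show ?case using uf_int[OF U, of a "\<Inter>A"] by simp
qed

lemma initseg_trans:
  assumes "initseg a b" "initseg b c" shows "initseg a c"
proof -
  from assms obtain i j where "a = {x\<in>b. x \<le> i}" "b = {x\<in>c. x \<le> j}"
    unfolding initseg_def by blast
  then have "a = {x\<in>c. x \<le> min i j}" by auto
  then show ?thesis unfolding initseg_def by blast
qed

lemma big_in_U:
  assumes U: "nonprincipal_ultrafilter U" and ns: "nonstandard_hypernat U f"
  shows "{i. b < f i} \<in> U"
proof -
  have eq: "{i. b < f i} = \<Inter>((\<lambda>n. - {i. f i = n}) ` {..b})" by auto
  have "(\<lambda>n. - {i. f i = n}) ` {..b} \<subseteq> U"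
  proof
    fix A assume "A \<in> (\<lambda>n. - {i. f i = n}) ` {..b}"
    then obtain n where A: "A = - {i. f i = n}" by blast
    have "{i. f i = n} \<notin> U" using ns unfolding nonstandard_hypernat_def by blast
    then show "A \<in> U" using A uf_compl[OF U] by blast
  qed
  then show ?thesis unfolding eq using uf_inter_finite[OF U] by blast
qed

lemma finite_chain_cover:
  assumes "finite A" "A \<subseteq> \<Union>(range (xs::nat \<Rightarrow> 'a set))"
    and "\<And>k l. k \<le> l \<Longrightarrow> xs k \<subseteq> xs l"
  shows "\<exists>K. A \<subseteq> xs K"
  using assms(1,2)
proof (induction A rule: finite_induct)
  case empty then show ?case by auto
next
  case (insert a A)
  then obtain K where K: "A \<subseteq> xs K" by auto
  from insert obtain k where "a \<in> xs k" by auto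
  then show ?case using K assms(3)[of k "max k K"] assms(3)[of K "max k K"]
    by (intro exI[of _ "max k K"]) auto
qed

theorem mainTheorem18:
  fixes U :: "nat set set" and f :: "nat \<Rightarrow> nat" and T :: "nat set set"
  assumes "nonprincipal_ultrafilter U"
    and "nonstandard_hypernat U f"
    and "beta_tree U f T"
  shows "\<forall>s\<in>tree_after T (stem T). \<exists>X. infinite X \<and> initseg s X \<and> interval s X \<subseteq> body T"
proof
  fix s assume sT': "s \<in> tree_after T (stem T)"
  let ?T' = "tree_after T (stem T)"
  have U: "nonprincipal_ultrafilter U" by fact
  have tree: "is_tree T" and ext: "\<forall>t\<in>?T'. {i. t \<union> {f i} \<in> T} \<in> U"
    using assms(3) unfolding beta_tree_def by auto
  have sT: "s \<in> T" "initseg (stem T) s" using sT' unfolding tree_after_def by auto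
  have sfin: "finite s" using tree sT unfolding is_tree_def by auto
  define m where "m = Max (insert 0 s)"
  have sm: "\<And>x. x \<in> s \<Longrightarrow> x \<le> m" unfolding m_def using sfin by simp
  have step: "\<exists>n. Max (insert m S) < n \<and> (\<forall>F\<subseteq>S. s \<union> F \<in> ?T' \<longrightarrow> insert n (s \<union> F) \<in> T)"
    if "finite S" for S
  proof -
    let ?A = "(\<lambda>F. {i. (s \<union> F) \<union> {f i} \<in> T}) ` {F. F \<subseteq> S \<and> s \<union> F \<in> ?T'}"
    define B where "B = {i. Max (insert m S) < f i} \<inter> \<Inter>?A"
    note int = uf_int[OF U] and emp = uf_empty[OF U]
    have "?A \<subseteq> U"
    proof (rule image_subsetI)
      fix F assume "F \<in> {F. F \<subseteq> S \<and> s \<union> F \<in> ?T'}"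
      then have "s \<union> F \<in> ?T'" by blast
      with ext show "{i. (s \<union> F) \<union> {f i} \<in> T} \<in> U" by (rule bspec)
    qed
    moreover have "finite ?A"
    proof (rule finite_imageI)
      have "{F. F \<subseteq> S \<and> s \<union> F \<in> ?T'} \<subseteq> Pow S" by blast
      then show "finite {F. F \<subseteq> S \<and> s \<union> F \<in> ?T'}"
        using that by (rule finite_subset[OF _ finite_Pow_iff[THEN iffD2]])
    qed
    ultimately have A: "\<Inter>?A \<in> U" by (rule uf_inter_finite[OF U, rotated])
    have "{i. Max (insert m S) < f i} \<in> U" by (rule big_in_U[OF U assms(2)])
    then have "B \<in> U" unfolding B_def using A by (rule int)
    then have "B \<noteq> {}" using emp by auto
    then obtain i where i: "i \<in> B" by auto
    show ?thesis
    proof (intro exI[of _ "f i"] conjI allI impI)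
      show "Max (insert m S) < f i" using i unfolding B_def by blast
      fix F assume "F \<subseteq> S" "s \<union> F \<in> ?T'"
      then have "i \<in> {i. (s \<union> F) \<union> {f i} \<in> T}" using i unfolding B_def by blast
      then show "insert (f i) (s \<union> F) \<in> T" by simp
    qed
  qed
  have "\<exists>g. \<forall>S. finite S \<longrightarrow> Max (insert m S) < g S \<and> (\<forall>F\<subseteq>S. s \<union> F \<in> ?T' \<longrightarrow> insert (g S) (s \<union> F) \<in> T)"
    by (rule choice) (use step in blast)
  then obtain g where g: "\<And>S. finite S \<Longrightarrow> Max (insert m S) < g S \<and> (\<forall>F\<subseteq>S. s \<union> F \<in> ?T' \<longrightarrow> insert (g S) (s \<union> F) \<in> T)"
    by blast
  define xs where "xs k = ((\<lambda>S. insert (g S) S) ^^ k) {}" for k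
  have xs0: "xs 0 = {}" and xsS: "\<And>k. xs (Suc k) = insert (g (xs k)) (xs k)"
    unfolding xs_def by auto
  have xsfin: "finite (xs k)" for k by (induction k) (auto simp: xs0 xsS)
  have gbig: "m < g (xs k) \<and> (\<forall>x\<in>xs k. x < g (xs k))" for k
    using g[OF xsfin[of k]] xsfin[of k] by (auto simp: Max_less_iff)
  have xsm: "\<forall>x\<in>xs k. m < x" for k
    by (induction k) (auto simp: xs0 xsS gbig)
  have card: "card (xs k) = k" for k
  proof (induction k)
    case 0 then show ?case by (simp add: xs0)
  next
    case (Suc k)
    have "g (xs k) \<notin> xs k" using gbig[of k] by auto
    then show ?case using Suc xsfin[of k] by (simp add: xsS)
  qed
  have mono: "xs k \<subseteq> xs l" if "k \<le> l" for k l
    using that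
  proof (induction l)
    case 0 then show ?case by simp
  next
    case (Suc l) then show ?case by (auto simp: xsS le_Suc_eq)
  qed
  define X where "X = s \<union> \<Union>(range xs)"
  have initG: "initseg s (s \<union> G)" if "\<forall>x\<in>G. m < x" for G
  proof -
    have "s = {j \<in> s \<union> G. j \<le> m}" using that sm by force
    then show ?thesis unfolding initseg_def by blast
  qed
  have P: "\<forall>F\<subseteq>xs k. s \<union> F \<in> T" for k
  proof (induction k)
    case 0 then show ?case using sT by (simp add: xs0)
  next
    case (Suc k)
    show ?case
    proof (intro allI impI)
      fix F assume F: "F \<subseteq> xs (Suc k)"
      show "s \<union> F \<in> T"
      proof (cases "g (xs k) \<in> F")
        case False
        then have "F \<subseteq> xs k" using F by (auto simp: xsS)
        then show ?thesis using Suc by blast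
      next
        case True
        let ?G = "F - {g (xs k)}"
        have G: "?G \<subseteq> xs k" using F by (auto simp: xsS)
        have "s \<union> ?G \<in> T" using Suc G by blast
        moreover have "initseg (stem T) (s \<union> ?G)"
          using initseg_trans[OF sT(2) initG] G xsm[of k] by blast
        ultimately have "s \<union> ?G \<in> ?T'" unfolding tree_after_def by blast
        then have "insert (g (xs k)) (s \<union> ?G) \<in> T" using g[OF xsfin[of k]] G by blast
        moreover have "insert (g (xs k)) (s \<union> ?G) = s \<union> F" using True by auto
        ultimately show ?thesis by simp
      qed
    qed
  qed
  have Xinf: "infinite X"
  proof
    assume "finite X"
    then have "card (xs (Suc (card X))) \<le> card X"
      by (intro card_mono) (auto simp: X_def)
    then show False by (simp add: card)
  qed
  have XmG: "\<forall>x\<in>\<Union>(range xs). m < x" using xsm by blast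
  have Xinit: "initseg s X" unfolding X_def by (rule initG[OF XmG])
  have "interval s X \<subseteq> body T"
  proof
    fix Y assume "Y \<in> interval s X"
    then have Yinf: "infinite Y" and sY: "initseg s Y" and YX: "Y \<subseteq> X"
      unfolding interval_def by auto
    from sY obtain i0 where i0: "s = {j \<in> Y. j \<le> i0}" unfolding initseg_def by blast
    have sY': "s \<subseteq> Y" using i0 by auto
    have Ym: "{j \<in> Y. j \<le> m} = s"
    proof
      show "{j \<in> Y. j \<le> m} \<subseteq> s" using YX XmG unfolding X_def by force
      show "s \<subseteq> {j \<in> Y. j \<le> m}" using sY' sm by auto
    qed
    show "Y \<in> body T" unfolding body_def
    proof (intro CollectI conjI allI impI Yinf)
      fix u assume u: "finite u \<and> initseg u Y"
      then obtain i where ui: "u = {j \<in> Y. j \<le> i}" unfolding initseg_def by blast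
      show "u \<in> T"
      proof (cases "i \<le> m")
        case True
        then have "u = {j \<in> s. j \<le> i}" using ui Ym by auto
        then have "initseg u s" unfolding initseg_def by blast
        then show ?thesis using tree sT unfolding is_tree_def by blast
      next
        case False
        have us: "u = s \<union> (u - s)" using ui sY' sm False by force
        have umx: "u - s \<subseteq> \<Union>(range xs)" using ui YX unfolding X_def by auto
        have "finite (u - s)" using u by simp
        then obtain K where "u - s \<subseteq> xs K" using finite_chain_cover[OF _ umx] mono by blast
        then show ?thesis using P[of K] us by metis
      qed
    qed
  qed
  then show "\<exists>X. infinite X \<and> initseg s X \<and> interval s X \<subseteq> body T"
    using Xinf Xinit by blast
qed

end
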